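(* Let $\mu>0$, $T_s>0$, $T_w>0$ and $\sigma_{\mathrm{off}}\in[0,1)$. Define for $\rho\in(0,1)$ the function $f(\rho)=\dfrac{e^{-\mu\rho T_s}}{\mu\rho}$ and let $b=T_s+T_w$. Then $f''(\rho)\bigl(f(\rho)+b\bigr)\ge 2\bigl(f'(\rho)\bigr)^2$ for all $\rho\in(0,1)$; consequently the function $E(\rho)=1-(1-\sigma_{\mathrm{off}})(1-\rho)\dfrac{f(\rho)}{f(\rho)+T_s+T_w}$ is concave on $(0,1)$.
   Context: This is the normalized energy consumption $E(\rho)$ of an Energy Efficient Ethernet link at normalized load $\rho$ under the "frame transmission" policy with Poisson packet arrivals, where $f(\rho)$ is the mean time spent in the low-power state, $\mu^{-1}$ the mean packet transmission time, $T_s$, $T_w$ the sleep and wake transition times, and $\sigma_{\mathrm{off}}$ the relative power in the idle state. *)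

theory Defs
  imports "HOL-Analysis.Analysis"
begin

definition eee_f :: "real \<Rightarrow> real \<Rightarrow> real \<Rightarrow> real" where
  "eee_f mu Ts rho = exp (- mu * rho * Ts) / (mu * rho)"

definition eee_E :: "real \<Rightarrow> real \<Rightarrow> real \<Rightarrow> real \<Rightarrow> real \<Rightarrow> real" where
  "eee_E mu Ts Tw soff rho =
     1 - (1 - soff) * (1 - rho) * (eee_f mu Ts rho / (eee_f mu Ts rho + Ts + Tw))"

end

theory Submission
  imports Defs
begin

lemma f_deriv:
  assumes "mu > 0" "rho > 0"
  shows "(eee_f mu Ts has_real_derivative (- eee_f mu Ts rho * (mu*Ts + 1/rho))) (at rho)"
proof -
  have "((\<lambda>r. exp (- mu * r * Ts) / (mu * r)) has_real_derivative
     ((exp (- mu * rho * Ts) * (- mu * Ts)) * (mu*rho) - exp (- mu * rho * Ts) * mu) / ((mu*rho)*(mu*rho))) (at rho)"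
    using assms by (auto intro!: derivative_eq_intros)
  moreover have "((exp (- mu * rho * Ts) * (- mu * Ts)) * (mu*rho) - exp (- mu * rho * Ts) * mu) / ((mu*rho)*(mu*rho))
     = - eee_f mu Ts rho * (mu*Ts + 1/rho)"
    using assms by (simp add: eee_f_def field_simps power2_eq_square)
  ultimately show ?thesis by (simp add: eee_f_def[abs_def])
qed

lemma f1_deriv:
  assumes "mu > 0" "rho > 0"
  shows "((\<lambda>r. - eee_f mu Ts r * (mu*Ts + 1/r)) has_real_derivative
          (eee_f mu Ts rho * ((mu*Ts + 1/rho)^2 + 1/rho^2))) (at rho)"
proof -
  have "((\<lambda>r. - eee_f mu Ts r * (mu*Ts + 1/r)) has_real_derivative
     (- (- eee_f mu Ts rho * (mu*Ts + 1/rho)) * (mu*Ts + 1/rho) - eee_f mu Ts rho * (- 1/rho^2))) (at rho)"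
    using assms f_deriv[OF assms]
    by (auto intro!: derivative_eq_intros simp: power2_eq_square)
  moreover have "(- (- eee_f mu Ts rho * (mu*Ts + 1/rho)) * (mu*Ts + 1/rho) - eee_f mu Ts rho * (- 1/rho^2))
     = eee_f mu Ts rho * ((mu*Ts + 1/rho)^2 + 1/rho^2)"
    by (simp add: algebra_simps power2_eq_square)
  ultimately show ?thesis by simp
qed

lemma key_ineq:
  fixes x :: real assumes "x > 0" shows "exp (-x) * (x + 2) \<le> x^2 + 2*x + 2"
proof -
  have "exp (-x) \<le> 1" using assms by simp
  hence "exp (-x) * (x + 2) \<le> x + 2" using assms by (simp add: mult_left_le_one_le)
  thus ?thesis using assms by (smt (verit) zero_le_power2)
qed

lemma f_pos: "mu > 0 \<Longrightarrow> rho > 0 \<Longrightarrow> eee_f mu Ts rho > 0"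
  by (simp add: eee_f_def)

lemma ineq:
  fixes mu Ts Tw rho :: real
  assumes "mu > 0" "Ts > 0" "Tw > 0" "rho > 0"
  defines "F \<equiv> eee_f mu Ts rho" and "u \<equiv> mu*Ts + 1/rho" and "v \<equiv> 1/rho"
  shows "F * (u^2 + v^2) * (F + (Ts + Tw)) \<ge> 2 * (- F * u)^2"
proof -
  have Fp: "F > 0" using f_pos assms unfolding F_def by simp
  define x where "x = mu*Ts*rho"
  have xp: "x > 0" using assms by (simp add: x_def)
  have "F * (u^2 - v^2) = Ts * (exp (-x) * (x + 2)) / rho^2"
    using assms unfolding F_def u_def v_def x_def eee_f_def
    by (simp add: field_simps power2_eq_square)
  also have "\<dots> \<le> Ts * (x^2 + 2*x + 2) / rho^2"
    using key_ineq[OF xp] assms by (simp add: divide_right_mono)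
  also have "\<dots> = Ts * (u^2 + v^2)"
    using assms unfolding u_def v_def x_def by (simp add: field_simps power2_eq_square)
  also have "\<dots> \<le> (Ts + Tw) * (u^2 + v^2)"
    using assms by (intro mult_right_mono) auto
  finally have h: "F * (u^2 - v^2) \<le> (Ts + Tw) * (u^2 + v^2)" .
  have "2 * (- F * u)^2 = F * (F * (2*u^2))" by (simp add: power2_eq_square)
  also have "\<dots> \<le> F * (F * (u^2 + v^2) + (Ts + Tw) * (u^2 + v^2))"
    using h Fp by (intro mult_left_mono) (auto simp: algebra_simps)
  also have "\<dots> = F * (u^2 + v^2) * (F + (Ts + Tw))" by (simp add: algebra_simps)
  finally show ?thesis .
qed

theorem mainTheorem3:
  fixes mu Ts Tw soff :: real
  assumes "mu > 0" and "Ts > 0" and "Tw > 0" and "0 \<le> soff" and "soff < 1"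
  shows "(\<forall>rho\<in>{0<..<1}.
            deriv (deriv (eee_f mu Ts)) rho * (eee_f mu Ts rho + (Ts + Tw))
              \<ge> 2 * (deriv (eee_f mu Ts) rho)\<^sup>2)
         \<and> concave_on {0<..<1} (eee_E mu Ts Tw soff)"
proof -
  define F where "F = eee_f mu Ts"
  define F1 where "F1 = (\<lambda>r. - F r * (mu*Ts + 1/r))"
  define F2 where "F2 = (\<lambda>r. F r * ((mu*Ts + 1/r)^2 + 1/r^2))"
  define b where "b = Ts + Tw"
  have bp: "b > 0" using assms by (simp add: b_def)
  have dF: "\<And>r. r > 0 \<Longrightarrow> (F has_real_derivative F1 r) (at r)"
    unfolding F_def F1_def using f_deriv assms(1) by blast
  have dF1: "\<And>r. r > 0 \<Longrightarrow> (F1 has_real_derivative F2 r) (at r)"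
    unfolding F_def F1_def F2_def using f1_deriv assms(1) by blast
  have Fp: "\<And>r. r > 0 \<Longrightarrow> F r > 0" unfolding F_def using f_pos assms(1) by blast
  have F1n: "\<And>r. r > 0 \<Longrightarrow> F1 r < 0" unfolding F1_def using Fp assms(1,2)
    by (simp add: mult_pos_pos add_pos_pos)
  have derF: "\<And>r. r > 0 \<Longrightarrow> deriv F r = F1 r" using dF DERIV_imp_deriv by blast
  have derF2: "\<And>r. r > 0 \<Longrightarrow> deriv (deriv F) r = F2 r"
  proof -
    fix r :: real assume r: "r > 0"
    have "(deriv F has_real_derivative F2 r) (at r)"
      by (rule has_field_derivative_transform_within_open[where f=F1 and S="{0<..}"])
         (use r dF1 derF in auto)
    thus "deriv (deriv F) r = F2 r" by (rule DERIV_imp_deriv)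
  qed
  have main: "\<And>r. r > 0 \<Longrightarrow> F2 r * (F r + b) \<ge> 2 * (F1 r)^2"
    unfolding F2_def F1_def F_def b_def using ineq[OF assms(1-3)]
    by (simp add: mult.assoc power_one_over)
  have part1: "\<forall>rho\<in>{0<..<1}.
            deriv (deriv (eee_f mu Ts)) rho * (eee_f mu Ts rho + (Ts + Tw))
              \<ge> 2 * (deriv (eee_f mu Ts) rho)\<^sup>2"
    using main derF derF2 unfolding F_def b_def by auto
  define c where "c = 1 - soff"
  have cp: "c > 0" using assms by (simp add: c_def)
  define G1 where "G1 = (\<lambda>r. b * F1 r / (F r + b)^2)"
  define G2 where "G2 = (\<lambda>r. b * (F2 r * (F r + b) - 2 * (F1 r)^2) / (F r + b)^3)"
  define g where "g = (\<lambda>r. F r / (F r + b))"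
  define H1 where "H1 = (\<lambda>r. c * (- (F r / (F r + b)) + (1 - r) * G1 r))"
  define H2 where "H2 = (\<lambda>r. c * (- 2 * G1 r + (1 - r) * G2 r))"
  have E_eq: "\<And>r. - eee_E mu Ts Tw soff r = c * ((1 - r) * (F r / (F r + b))) - 1"
    unfolding eee_E_def F_def c_def b_def by (simp add: add.assoc)
  have dG: "\<And>r. r > 0 \<Longrightarrow> ((\<lambda>r. F r / (F r + b)) has_real_derivative G1 r) (at r)"
  proof -
    fix r :: real assume r: "r > 0"
    have ne: "F r + b \<noteq> 0" using Fp[OF r] bp by simp
    have "((\<lambda>r. F r / (F r + b)) has_real_derivative
        (F1 r * (F r + b) - F r * F1 r) / ((F r + b) * (F r + b))) (at r)"
      using dF[OF r] ne by (auto intro!: derivative_eq_intros)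
    thus "((\<lambda>r. F r / (F r + b)) has_real_derivative G1 r) (at r)"
      unfolding G1_def by (simp add: power2_eq_square algebra_simps)
  qed
  have dG1: "\<And>r. r > 0 \<Longrightarrow> (G1 has_real_derivative G2 r) (at r)"
  proof -
    fix r :: real assume r: "r > 0"
    have ne: "F r + b \<noteq> 0" using Fp[OF r] bp by simp
    have "((\<lambda>r. b * F1 r / (F r + b)^2) has_real_derivative
        (b * F2 r * (F r + b)^2 - b * F1 r * (2 * (F r + b) * F1 r)) / ((F r + b)^2 * (F r + b)^2)) (at r)"
      using dF[OF r] dF1[OF r] ne
      by (auto intro!: derivative_eq_intros)
    moreover have "(b * F2 r * (F r + b)^2 - b * F1 r * (2 * (F r + b) * F1 r)) / ((F r + b)^2 * (F r + b)^2) = G2 r"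
    proof -
      have gen: "\<And>X p q. X \<noteq> 0 \<Longrightarrow> (b * p * X^2 - b * q * (2 * X * q)) / (X^2 * X^2)
                 = b * (p * X - 2 * q^2) / X^3"
        by (simp add: field_simps power2_eq_square power3_eq_cube)
      show ?thesis unfolding G2_def using gen[OF ne] by simp
    qed
    ultimately show "(G1 has_real_derivative G2 r) (at r)" unfolding G1_def by simp
  qed
  have dg: "\<And>r. r > 0 \<Longrightarrow> (g has_real_derivative G1 r) (at r)"
    using dG unfolding g_def by blast
  have dH: "\<And>r. r \<in> {0<..<1::real} \<Longrightarrow> ((\<lambda>r. - eee_E mu Ts Tw soff r) has_real_derivative H1 r) (at r)"
  proof -
    fix r :: real assume r: "r \<in> {0<..<1::real}"
    have "((\<lambda>r. c * ((1 - r) * g r) - 1) has_real_derivative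
        c * ((- 1) * g r + (1 - r) * G1 r) - 0) (at r)"
      using dg r by (auto intro!: derivative_eq_intros)
    hence "((\<lambda>r. c * ((1 - r) * (F r / (F r + b))) - 1) has_real_derivative
        c * ((- 1) * (F r / (F r + b)) + (1 - r) * G1 r) - 0) (at r)"
      unfolding g_def by simp
    thus "((\<lambda>r. - eee_E mu Ts Tw soff r) has_real_derivative H1 r) (at r)"
      unfolding E_eq H1_def by simp
  qed
  have dH1: "\<And>r. r \<in> {0<..<1::real} \<Longrightarrow> (H1 has_real_derivative H2 r) (at r)"
  proof -
    fix r :: real assume r: "r \<in> {0<..<1::real}"
    have "(H1 has_real_derivative c * (- G1 r + ((- 1) * G1 r + (1 - r) * G2 r))) (at r)"
    proof -
      have "((\<lambda>r. c * (- g r + (1 - r) * G1 r)) has_real_derivative c * (- G1 r + ((- 1) * G1 r + (1 - r) * G2 r))) (at r)"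
        using dg dG1 r by (auto intro!: derivative_eq_intros)
      thus ?thesis unfolding H1_def g_def by simp
    qed
    thus "(H1 has_real_derivative H2 r) (at r)" unfolding H2_def by (simp add: algebra_simps)
  qed
  have H2p: "\<And>r. r \<in> {0<..<1::real} \<Longrightarrow> H2 r \<ge> 0"
  proof -
    fix r :: real assume r: "r \<in> {0<..<1::real}"
    have r0: "r > 0" using r by simp
    have "G1 r \<le> 0" unfolding G1_def using F1n[OF r0] bp
      by (simp add: divide_nonpos_nonneg mult_nonneg_nonpos less_imp_le)
    moreover have "G2 r \<ge> 0" unfolding G2_def using main[OF r0] bp Fp[OF r0]
      by (intro divide_nonneg_nonneg mult_nonneg_nonneg) auto
    moreover have "(1 - r) * G2 r \<ge> 0" using calculation r by simp
    ultimately have "- 2 * G1 r + (1 - r) * G2 r \<ge> 0" by linarith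
    thus "H2 r \<ge> 0" unfolding H2_def using cp by simp
  qed
  have "convex_on {0<..<1} (\<lambda>r. - eee_E mu Ts Tw soff r)"
    by (rule f''_ge0_imp_convex[OF _ dH dH1 H2p]) auto
  hence "concave_on {0<..<1} (eee_E mu Ts Tw soff)" by (simp add: concave_on_def)
  with part1 show ?thesis by blast
qed

end
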